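(* Let $t<n$, let $\mathcal{E}$ be an information exchange and $P$ a decision protocol for the hard crash failures context $(\mathcal{E},\mathit{Crash}_t)$ such that SBA($\mathcal{N}$) is valid in $\mathcal{I}_{P,\mathcal{E},\mathit{Crash}_t}$. Then for every agent $i$ and value $v$, the formulas $\mathtt{decides}_i(v)\Rightarrow C_{\mathcal{A}}(\mathtt{decides}_{\mathcal{A}}(v))$ and $\mathtt{decides}_i(v)\Rightarrow C_{\mathcal{A}}(\exists v)$ are valid in $\mathcal{I}_{P,\mathcal{E},\mathit{Crash}_t}$.
   Context: Agents $\mathrm{Agt}=\{1,\dots,n\}$; decision values $V$; actions $A_i=\{\mathtt{noop}\}\cup\{\mathtt{decide}_i(v):v\in V\}$. An information exchange $\mathcal{E}$ gives each agent $i$ a tuple $(L_i,I_i,M_i,\mu_i,\delta_i)$: local states $L_i$ of the form $\langle\mathit{init}_i,\mathit{time}_i,\dots\rangle$ ($\mathit{init}_i\in V$ the initial preference) together with a distinguished state $\mathit{crashed}$; initial states $I_i\subseteq L_i$; messages $M_i\ni\bot$ ($\bot$ = no message); $\mu_i:L_i\times A_i\to(\mathrm{Agt}\to M_i)$; $\delta_i:L_i\times A_i\times\prod_jM_j\to L_i$, preserving $\mathit{init}_i$ and incrementing $\mathit{time}_i$. A decision protocol is $P=(P_i:L_i\to A_i)_i$; in the hard crash model $P_i(\mathit{crashed})=\mathtt{noop}$. A failure model $(L^*_e,I_e,\delta_e,\mathit{Adv})$ has environment states, initial ones, update $\delta_e:L^*_e\times\prod_iA_i\to L^*_e$, and adversaries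 $(\Delta^t,\Delta^r,\Delta^s)$ with $\Delta^t,\Delta^r:\mathbb{N}\times\mathrm{Agt}\times\mathrm{Agt}\times\bigcup_iM_i\to\bigcup_iM_i$, $\Delta^s_i:\mathbb{N}\times L_i\to L_i$. Runs $r$ of $\mathcal{I}_{P,\mathcal{E},\mathcal{F}}$: $r(0)=((s_e,\alpha),s_1,\dots,s_n)$ with $s_e\in I_e$, $\alpha\in\mathit{Adv}$, $s_i\in I_i$; from $r(k)=((s_e,\alpha),s_1,\dots,s_n)$, $r(k+1)=((\delta_e(s_e,(a_1,\dots,a_n)),\alpha),s'_1,\dots,s'_n)$ with $a_i=P_i(s_i)$ (action of $i$ at time $k$), $m_{i,j}=\mu_i(s_i,a_i)(j)$, $m'_{i,j}=\Delta^r(k,i,j,\Delta^t(k,i,j,m_{i,j}))$, $s^*_j=\delta_j(s_j,a_j,(m'_{1,j},\dots,m'_{n,j}))$, $s'_j=\Delta^s_j(k,s^*_j)$. $r_i(m)$ is $i$'s local state at time $m$. $\mathit{Crash}_t$: adversaries in which at most $t$ agents crash; $\Delta^r(k,i,j,m)=m$ always; an agent $i$ crashing in round $k+1$ has $\Delta^s_i(k',s)=\mathit{crashed}$ for all $s$ and $k'\ge k$, some $J\subseteq\mathrm{Agt}$ with $\Delta^t(k,i,j,m)=\bot$ for $j\in J$ and $=m$ for $j\notin J$, and $\Delta^t(k',i,j,m)=\bot$ for all $j$, $k'>k$; otherwise $\Delta^s_i$ and $\Delta^t(\cdot,i,\cdot,\cdot)$ act as identity. An agent has a fault in a round if its sent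 messages are altered by $\Delta^t$, its received messages altered by $\Delta^r$, or its updated state altered by $\Delta^s_i$. $\mathcal{N}(r,m)$ = agents with no fault in any round of $r$; $\mathcal{A}(r,m)$ = agents with no fault in rounds $1..m$. Formulas: $\mathtt{decides}_i(v)$ holds at $(r,m)$ iff $P_i(r_i(m))=\mathtt{decide}_i(v)$; $\exists v$ holds at $(r,m)$ iff some agent's $\mathit{init}$ in $r$ is $v$; $\mathtt{decides}_S(v):=\bigwedge_{i\in S}\mathtt{decides}_i(v)$. $(r,m)\sim_i(r',m')$ iff $r_i(m)=r'_i(m')$; $K_i\phi$ holds iff $\phi$ holds at all $\sim_i$-related points; for an indexical set $S$ (assignment of a set of agents to each point), $E_S\phi=\bigwedge_{i\in S}K_i\phi$ and $C_S\phi=\bigwedge_{k\ge1}E_S^k\phi$. SBA($S$) valid means in every run: each agent decides at most once; if $i\in S(r,m)$ performs $\mathtt{decide}_i(v)$ at time $m$ then every $j\in S(r,m)$ performs $\mathtt{decide}_j(v)$ at time $m$; and then some agent has initial preference $v$. *)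

theory Defs
  imports Main
begin

datatype ('v, 'x) lstate = Crashed | St (st_init: 'v) (st_time: nat) (st_rest: 'x)

(* Actions of agent i: noop or decide_i(v) (the agent index is implicit) *)
datatype 'v act = Noop | Decide 'v

(* Messages: 'm option, with None playing the role of bottom (no message) *)

definition agents :: "nat \<Rightarrow> nat set" where
  "agents n = {1..n}"

record ('v, 'x, 'm) info_exchange =
  Ls :: "nat \<Rightarrow> ('v, 'x) lstate set"
  Is :: "nat \<Rightarrow> ('v, 'x) lstate set"
  Ms :: "nat \<Rightarrow> 'm option set"
  mu :: "nat \<Rightarrow> ('v, 'x) lstate \<Rightarrow> 'v act \<Rightarrow> nat \<Rightarrow> 'm option"
  dl :: "nat \<Rightarrow> ('v, 'x) lstate \<Rightarrow> 'v act \<Rightarrow> (nat \<Rightarrow> 'm option) \<Rightarrow> ('v, 'x) lstate"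

definition wf_info_exchange :: "nat \<Rightarrow> ('v, 'x, 'm) info_exchange \<Rightarrow> bool" where
  "wf_info_exchange n E \<longleftrightarrow>
     (\<forall>i\<in>agents n.
        Crashed \<in> Ls E i \<and> Is E i \<subseteq> Ls E i \<and> None \<in> Ms E i \<and>
        (\<forall>s\<in>Ls E i. \<forall>a j. mu E i s a j \<in> Ms E i) \<and>
        (\<forall>s\<in>Ls E i. \<forall>a ms. (\<forall>j\<in>agents n. ms j \<in> Ms E j) \<longrightarrow> dl E i s a ms \<in> Ls E i) \<and>
        (\<forall>v tm x a ms. St v tm x \<in> Ls E i \<longrightarrow> (\<forall>j\<in>agents n. ms j \<in> Ms E j) \<longrightarrow>
            (\<exists>x'. dl E i (St v tm x) a ms = St v (Suc tm) x')))"

type_synonym ('v, 'x) protocol = "nat \<Rightarrow> ('v, 'x) lstate \<Rightarrow> 'v act"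

definition hard_crash_protocol :: "nat \<Rightarrow> ('v, 'x) protocol \<Rightarrow> bool" where
  "hard_crash_protocol n P \<longleftrightarrow> (\<forall>i\<in>agents n. P i Crashed = Noop)"

record ('v, 'x, 'm) adversary =
  Dt :: "nat \<Rightarrow> nat \<Rightarrow> nat \<Rightarrow> 'm option \<Rightarrow> 'm option"
  Dr :: "nat \<Rightarrow> nat \<Rightarrow> nat \<Rightarrow> 'm option \<Rightarrow> 'm option"
  Ds :: "nat \<Rightarrow> nat \<Rightarrow> ('v, 'x) lstate \<Rightarrow> ('v, 'x) lstate"  (* Ds agent time state *)

record ('e, 'v, 'x, 'm) failure_model =
  Le :: "'e set"
  Ie :: "'e set"
  de :: "'e \<Rightarrow> (nat \<Rightarrow> 'v act) \<Rightarrow> 'e"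
  Adv :: "('v, 'x, 'm) adversary set"

definition wf_env :: "('e, 'v, 'x, 'm) failure_model \<Rightarrow> bool" where
  "wf_env F \<longleftrightarrow> Ie F \<subseteq> Le F \<and> (\<forall>s\<in>Le F. \<forall>a. de F s a \<in> Le F)"

(* Crash_t: at most t agents crash; agent i crashing in round crk i + 1 *)
definition crash_adv :: "nat \<Rightarrow> nat \<Rightarrow> ('v, 'x, 'm) adversary set" where
  "crash_adv n t = {\<alpha>.
     (\<forall>k i j m. Dr \<alpha> k i j m = m) \<and>
     (\<exists>F crk J. F \<subseteq> agents n \<and> card F \<le> t \<and>
        (\<forall>i\<in>F. J i \<subseteq> agents n \<and>
           (\<forall>k' s. crk i \<le> k' \<longrightarrow> Ds \<alpha> i k' s = Crashed) \<and>
           (\<forall>k' s. k' < crk i \<longrightarrow> Ds \<alpha> i k' s = s) \<and>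
           (\<forall>j m. Dt \<alpha> (crk i) i j m = (if j \<in> J i then None else m)) \<and>
           (\<forall>k' j m. crk i < k' \<longrightarrow> Dt \<alpha> k' i j m = None) \<and>
           (\<forall>k' j m. k' < crk i \<longrightarrow> Dt \<alpha> k' i j m = m)) \<and>
        (\<forall>i\<in>agents n - F. (\<forall>k s. Ds \<alpha> i k s = s) \<and> (\<forall>k j m. Dt \<alpha> k i j m = m)))}"

type_synonym ('e, 'v, 'x, 'm) gstate =
  "('e \<times> ('v, 'x, 'm) adversary) \<times> (nat \<Rightarrow> ('v, 'x) lstate)"

type_synonym ('e, 'v, 'x, 'm) run = "nat \<Rightarrow> ('e, 'v, 'x, 'm) gstate"

definition step :: "nat \<Rightarrow> ('v, 'x, 'm) info_exchange \<Rightarrow> ('v, 'x) protocol \<Rightarrow>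
    ('e, 'v, 'x, 'm) failure_model \<Rightarrow> nat \<Rightarrow> ('e, 'v, 'x, 'm) gstate \<Rightarrow> ('e, 'v, 'x, 'm) gstate" where
  "step n E P F k g =
    (let se = fst (fst g); \<alpha> = snd (fst g); s = snd g;
         a = (\<lambda>i. if i \<in> agents n then P i (s i) else Noop);
         msg = (\<lambda>i j. mu E i (s i) (a i) j);
         msg' = (\<lambda>i j. Dr \<alpha> k i j (Dt \<alpha> k i j (msg i j)));
         sstar = (\<lambda>j. dl E j (s j) (a j) (\<lambda>i. if i \<in> agents n then msg' i j else None));
         s' = (\<lambda>j. if j \<in> agents n then Ds \<alpha> j k (sstar j) else Crashed)
     in ((de F se a, \<alpha>), s'))"

definition runs :: "nat \<Rightarrow> ('v, 'x) protocol \<Rightarrow> ('v, 'x, 'm) info_exchange \<Rightarrow>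
    ('e, 'v, 'x, 'm) failure_model \<Rightarrow> ('e, 'v, 'x, 'm) run set" where
  "runs n P E F = {r. \<exists>se\<in>Ie F. \<exists>\<alpha>\<in>Adv F. \<exists>s.
       (\<forall>i\<in>agents n. s i \<in> Is E i) \<and> (\<forall>i. i \<notin> agents n \<longrightarrow> s i = Crashed) \<and>
       r 0 = ((se, \<alpha>), s) \<and> (\<forall>k. r (Suc k) = step n E P F k (r k))}"

definition loc :: "('e, 'v, 'x, 'm) run \<Rightarrow> nat \<Rightarrow> nat \<Rightarrow> ('v, 'x) lstate" where
  "loc r i m = snd (r m) i"

definition adv_of :: "('e, 'v, 'x, 'm) run \<Rightarrow> ('v, 'x, 'm) adversary" where
  "adv_of r = snd (fst (r 0))"

(* agent i has a fault in round k+1 *)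
definition fault_in_round :: "nat \<Rightarrow> ('v, 'x, 'm) adversary \<Rightarrow> nat \<Rightarrow> nat \<Rightarrow> bool" where
  "fault_in_round n \<alpha> i k \<longleftrightarrow>
     (\<exists>j\<in>agents n. \<exists>m. Dt \<alpha> k i j m \<noteq> m) \<or>
     (\<exists>j\<in>agents n. \<exists>m. Dr \<alpha> k j i m \<noteq> m) \<or>
     (\<exists>s. Ds \<alpha> i k s \<noteq> s)"

type_synonym ('e, 'v, 'x, 'm) formula = "('e, 'v, 'x, 'm) run \<Rightarrow> nat \<Rightarrow> bool"
type_synonym ('e, 'v, 'x, 'm) indexical = "('e, 'v, 'x, 'm) run \<Rightarrow> nat \<Rightarrow> nat set"

definition Nonfaulty :: "nat \<Rightarrow> ('e, 'v, 'x, 'm) indexical" where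
  "Nonfaulty n r m = {i\<in>agents n. \<forall>k. \<not> fault_in_round n (adv_of r) i k}"

definition Active :: "nat \<Rightarrow> ('e, 'v, 'x, 'm) indexical" where
  "Active n r m = {i\<in>agents n. \<forall>k<m. \<not> fault_in_round n (adv_of r) i k}"

definition decides :: "('v, 'x) protocol \<Rightarrow> nat \<Rightarrow> 'v \<Rightarrow> ('e, 'v, 'x, 'm) formula" where
  "decides P i v r m \<longleftrightarrow> P i (loc r i m) = Decide v"

definition decides_set :: "('v, 'x) protocol \<Rightarrow> ('e, 'v, 'x, 'm) indexical \<Rightarrow> 'v \<Rightarrow> ('e, 'v, 'x, 'm) formula" where
  "decides_set P S v r m \<longleftrightarrow> (\<forall>i\<in>S r m. decides P i v r m)"

definition exists_val :: "nat \<Rightarrow> 'v \<Rightarrow> ('e, 'v, 'x, 'm) formula" where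
  "exists_val n v r m \<longleftrightarrow> (\<exists>i\<in>agents n. \<exists>tm x. loc r i 0 = St v tm x)"

definition imp :: "('e, 'v, 'x, 'm) formula \<Rightarrow> ('e, 'v, 'x, 'm) formula \<Rightarrow> ('e, 'v, 'x, 'm) formula" where
  "imp \<phi> \<psi> r m \<longleftrightarrow> (\<phi> r m \<longrightarrow> \<psi> r m)"

definition Kn :: "('e, 'v, 'x, 'm) run set \<Rightarrow> nat \<Rightarrow> ('e, 'v, 'x, 'm) formula \<Rightarrow> ('e, 'v, 'x, 'm) formula" where
  "Kn R i \<phi> r m \<longleftrightarrow> (\<forall>r'\<in>R. \<forall>m'. loc r' i m' = loc r i m \<longrightarrow> \<phi> r' m')"

definition Ev :: "('e, 'v, 'x, 'm) run set \<Rightarrow> ('e, 'v, 'x, 'm) indexical \<Rightarrow> ('e, 'v, 'x, 'm) formula \<Rightarrow> ('e, 'v, 'x, 'm) formula" where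
  "Ev R S \<phi> r m \<longleftrightarrow> (\<forall>i\<in>S r m. Kn R i \<phi> r m)"

definition Ck :: "('e, 'v, 'x, 'm) run set \<Rightarrow> ('e, 'v, 'x, 'm) indexical \<Rightarrow> ('e, 'v, 'x, 'm) formula \<Rightarrow> ('e, 'v, 'x, 'm) formula" where
  "Ck R S \<phi> r m \<longleftrightarrow> (\<forall>k\<ge>1. ((Ev R S) ^^ k) \<phi> r m)"

definition valid_in :: "('e, 'v, 'x, 'm) run set \<Rightarrow> ('e, 'v, 'x, 'm) formula \<Rightarrow> bool" where
  "valid_in R \<phi> \<longleftrightarrow> (\<forall>r\<in>R. \<forall>m. \<phi> r m)"

definition SBA_valid :: "nat \<Rightarrow> ('v, 'x) protocol \<Rightarrow> ('e, 'v, 'x, 'm) run set \<Rightarrow> ('e, 'v, 'x, 'm) indexical \<Rightarrow> bool" where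
  "SBA_valid n P R S \<longleftrightarrow> (\<forall>r\<in>R.
     (\<forall>i\<in>agents n. \<forall>m m' v v'. decides P i v r m \<longrightarrow> decides P i v' r m' \<longrightarrow> m = m') \<and>
     (\<forall>m. \<forall>i\<in>S r m. \<forall>v. decides P i v r m \<longrightarrow>
          (\<forall>j\<in>S r m. decides P j v r m) \<and> exists_val n v r m))"

end

theory Submission
  imports Defs
begin

primrec mkrun :: "nat \<Rightarrow> ('v, 'x, 'm) info_exchange \<Rightarrow> ('v, 'x) protocol \<Rightarrow>
    ('e, 'v, 'x, 'm) failure_model \<Rightarrow> ('e, 'v, 'x, 'm) gstate \<Rightarrow> nat \<Rightarrow> ('e, 'v, 'x, 'm) gstate" where
  "mkrun n E P F g0 0 = g0"
| "mkrun n E P F g0 (Suc k) = step n E P F k (mkrun n E P F g0 k)"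

lemma step_adv: "snd (fst (step n E P F k g)) = snd (fst g)"
  by (simp add: step_def Let_def)

lemma run_adv:
  assumes "r \<in> runs n P E F" shows "snd (fst (r k)) = adv_of r"
proof (induction k)
  case 0 then show ?case by (simp add: adv_of_def)
next
  case (Suc k)
  from assms have "r (Suc k) = step n E P F k (r k)" by (auto simp: runs_def)
  then show ?case using Suc by (simp add: step_adv)
qed

lemma step_cong:
  assumes "\<And>i j x. i \<in> agents n \<Longrightarrow> Dt a' k i j x = Dt a k i j x"
    and "Dr a' = Dr a"
    and "\<And>j y. j \<in> agents n \<Longrightarrow> Ds a' j k y = Ds a j k y"
  shows "fst (fst (step n E P F k ((e, a'), st))) = fst (fst (step n E P F k ((e, a), st)))
       \<and> snd (step n E P F k ((e, a'), st)) = snd (step n E P F k ((e, a), st))"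
proof -
  have "\<And>j. (\<lambda>i. if i \<in> agents n then Dr a' k i j (Dt a' k i j (mu E i (st i) (if i \<in> agents n then P i (st i) else Noop) j)) else None)
     = (\<lambda>i. if i \<in> agents n then Dr a k i j (Dt a k i j (mu E i (st i) (if i \<in> agents n then P i (st i) else Noop) j)) else None)"
    using assms(1,2) by (intro ext) auto
  then show ?thesis using assms(3) by (auto simp: step_def Let_def intro!: ext)
qed

lemma key:
  assumes adv: "Adv F = crash_adv n t"
    and hc: "hard_crash_protocol n P"
    and sba: "SBA_valid n P (runs n P E F) (Nonfaulty n)"
    and r: "r \<in> runs n P E F"
    and j: "j \<in> agents n" and dec: "decides P j v r m"
  shows "decides_set P (Active n) v r m \<and> exists_val n v r m"
proof -
  obtain se \<alpha> s where se: "se \<in> Ie F" and a: "\<alpha> \<in> Adv F"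
    and s1: "\<forall>i\<in>agents n. s i \<in> Is E i" and s2: "\<forall>i. i \<notin> agents n \<longrightarrow> s i = Crashed"
    and r0: "r 0 = ((se, \<alpha>), s)" and rs: "\<forall>k. r (Suc k) = step n E P F k (r k)"
    using r unfolding runs_def by blast
  have aor: "adv_of r = \<alpha>" using r0 by (simp add: adv_of_def)
  have aa: "\<alpha> \<in> crash_adv n t" using a adv by simp
  have H: "(\<forall>k i j m. Dr \<alpha> k i j m = m) \<and>
     (\<exists>F crk J. F \<subseteq> agents n \<and> card F \<le> t \<and>
        (\<forall>i\<in>F. J i \<subseteq> agents n \<and>
           (\<forall>k' s. crk i \<le> k' \<longrightarrow> Ds \<alpha> i k' s = Crashed) \<and>
           (\<forall>k' s. k' < crk i \<longrightarrow> Ds \<alpha> i k' s = s) \<and>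
           (\<forall>j m. Dt \<alpha> (crk i) i j m = (if j \<in> J i then None else m)) \<and>
           (\<forall>k' j m. crk i < k' \<longrightarrow> Dt \<alpha> k' i j m = None) \<and>
           (\<forall>k' j m. k' < crk i \<longrightarrow> Dt \<alpha> k' i j m = m)) \<and>
        (\<forall>i\<in>agents n - F. (\<forall>k s. Ds \<alpha> i k s = s) \<and> (\<forall>k j m. Dt \<alpha> k i j m = m)))"
    using aa unfolding crash_adv_def by (rule CollectD)
  have Dr_id: "\<forall>k i j m. Dr \<alpha> k i j m = m" using H by (rule conjunct1)
  obtain Fs crk J where
    Fs: "Fs \<subseteq> agents n" "card Fs \<le> t" and
    Fc: "\<forall>i\<in>Fs. J i \<subseteq> agents n \<and>
           (\<forall>k' s. crk i \<le> k' \<longrightarrow> Ds \<alpha> i k' s = Crashed) \<and>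
           (\<forall>k' s. k' < crk i \<longrightarrow> Ds \<alpha> i k' s = s) \<and>
           (\<forall>j m. Dt \<alpha> (crk i) i j m = (if j \<in> J i then None else m)) \<and>
           (\<forall>k' j m. crk i < k' \<longrightarrow> Dt \<alpha> k' i j m = None) \<and>
           (\<forall>k' j m. k' < crk i \<longrightarrow> Dt \<alpha> k' i j m = m)" and
    Fn: "\<forall>i\<in>agents n - Fs. (\<forall>k s. Ds \<alpha> i k s = s) \<and> (\<forall>k j m. Dt \<alpha> k i j m = m)"
    using conjunct2[OF H] by (elim exE conjE) (rule that; assumption)
  define keep where "keep i = (i \<notin> agents n \<or> (i \<in> Fs \<and> crk i < m))" for i
  define \<alpha>' where "\<alpha>' = \<lparr>Dt = (\<lambda>k i j x. if keep i then Dt \<alpha> k i j x else x),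
      Dr = Dr \<alpha>, Ds = (\<lambda>i k x. if keep i then Ds \<alpha> i k x else x)\<rparr>"
  have a': "\<alpha>' \<in> crash_adv n t"
    unfolding crash_adv_def
  proof (intro CollectI conjI exI[of _ "{i\<in>Fs. crk i < m}"] exI[of _ crk] exI[of _ J])
    show "\<forall>k i j m. Dr \<alpha>' k i j m = m" using Dr_id by (simp add: \<alpha>'_def)
    show "{i \<in> Fs. crk i < m} \<subseteq> agents n" using Fs by auto
    have "finite Fs" using Fs finite_subset[of Fs "agents n"] by (simp add: agents_def)
    then have "card {i \<in> Fs. crk i < m} \<le> card Fs" by (intro card_mono) auto
    then show "card {i \<in> Fs. crk i < m} \<le> t" using Fs by simp
    show "\<forall>i\<in>{i \<in> Fs. crk i < m}. J i \<subseteq> agents n \<and>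
           (\<forall>k' s. crk i \<le> k' \<longrightarrow> Ds \<alpha>' i k' s = Crashed) \<and>
           (\<forall>k' s. k' < crk i \<longrightarrow> Ds \<alpha>' i k' s = s) \<and>
           (\<forall>j m. Dt \<alpha>' (crk i) i j m = (if j \<in> J i then None else m)) \<and>
           (\<forall>k' j m. crk i < k' \<longrightarrow> Dt \<alpha>' k' i j m = None) \<and>
           (\<forall>k' j m. k' < crk i \<longrightarrow> Dt \<alpha>' k' i j m = m)"
      using Fc by (simp add: \<alpha>'_def keep_def)
    show "\<forall>i\<in>agents n - {i \<in> Fs. crk i < m}. (\<forall>k s. Ds \<alpha>' i k s = s) \<and> (\<forall>k j m. Dt \<alpha>' k i j m = m)"
      by (auto simp: \<alpha>'_def keep_def)
  qed
  define r' where "r' = mkrun n E P F ((se, \<alpha>'), s)"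
  have r'r: "r' \<in> runs n P E F"
    unfolding runs_def using se a' adv s1 s2 by (auto simp: r'_def)
  have aor': "adv_of r' = \<alpha>'" by (simp add: adv_of_def r'_def)
  have agree: "k \<le> m \<Longrightarrow> fst (fst (r' k)) = fst (fst (r k)) \<and> snd (r' k) = snd (r k)" for k
  proof (induction k)
    case 0 then show ?case by (simp add: r'_def r0)
  next
    case (Suc k)
    then have km: "k < m" by simp
    have A: "snd (fst (r k)) = \<alpha>" using run_adv[OF r] aor by simp
    have A': "snd (fst (r' k)) = \<alpha>'" using run_adv[OF r'r] aor' by simp
    obtain e st where rk: "r k = ((e, \<alpha>), st)" using A by (metis prod.collapse)
    have r'k: "r' k = ((e, \<alpha>'), st)" using A' Suc km rk by (metis Suc_leD prod.collapse fst_conv snd_conv)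
    have "fst (fst (step n E P F k ((e, \<alpha>'), st))) = fst (fst (step n E P F k ((e, \<alpha>), st)))
       \<and> snd (step n E P F k ((e, \<alpha>'), st)) = snd (step n E P F k ((e, \<alpha>), st))"
    proof (rule step_cong)
      show "Dt \<alpha>' k i j x = Dt \<alpha> k i j x" if "i \<in> agents n" for i j x
      proof (cases "keep i")
        case True then show ?thesis by (simp add: \<alpha>'_def)
      next
        case False
        have "Dt \<alpha> k i j x = x"
        proof (cases "i \<in> Fs")
          case True
          with False km have "k < crk i" by (simp add: keep_def)
          then show ?thesis using Fc True by blast
        next
          case False then show ?thesis using Fn that by blast
        qed
        then show ?thesis using False by (simp add: \<alpha>'_def)
      qed
      show "Dr \<alpha>' = Dr \<alpha>" by (simp add: \<alpha>'_def)
      show "Ds \<alpha>' j k y = Ds \<alpha> j k y" if "j \<in> agents n" for j y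
      proof (cases "keep j")
        case True then show ?thesis by (simp add: \<alpha>'_def)
      next
        case False
        have "Ds \<alpha> j k y = y"
        proof (cases "j \<in> Fs")
          case True
          with False km have "k < crk j" by (simp add: keep_def)
          then show ?thesis using Fc True by blast
        next
          case False then show ?thesis using Fn that by blast
        qed
        then show ?thesis using False by (simp add: \<alpha>'_def)
      qed
    qed
    then show ?case using rk r'k rs by (simp add: r'_def)
  qed
  have nf: "i \<in> Nonfaulty n r' m" if "i \<in> agents n" "\<not> keep i" for i
    using that by (simp add: Nonfaulty_def aor' fault_in_round_def \<alpha>'_def Dr_id)
  have jk: "\<not> keep j"
  proof
    assume "keep j"
    then have "j \<in> Fs" "crk j < m" using j by (auto simp: keep_def)
    then obtain m0 where m0: "m = Suc m0" "crk j \<le> m0" by (metis Suc_le_eq lessE less_imp_le_nat le_refl)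
    have A: "snd (fst (r m0)) = \<alpha>" using run_adv[OF r] aor by simp
    have D: "\<And>x. Ds \<alpha> j m0 x = Crashed" using m0(2) Fc \<open>j \<in> Fs\<close> by blast
    have "loc r j m = Crashed" using m0(1) rs j A D
      by (simp add: loc_def step_def Let_def)
    then show False using dec hc j by (simp add: decides_def hard_crash_protocol_def)
  qed
  have locm: "loc r' i m = loc r i m" for i using agree[of m] by (simp add: loc_def)
  have loc0: "loc r' i 0 = loc r i 0" for i using agree[of 0] by (simp add: loc_def)
  have "decides P j v r' m" using dec locm by (simp add: decides_def)
  with sba r'r nf[OF j jk] have S: "(\<forall>j'\<in>Nonfaulty n r' m. decides P j' v r' m) \<and> exists_val n v r' m"
    unfolding SBA_valid_def by blast
  have act: "i \<in> Nonfaulty n r' m" if "i \<in> Active n r m" for i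
  proof -
    have i: "i \<in> agents n" "\<forall>k<m. \<not> fault_in_round n \<alpha> i k" using that aor by (auto simp: Active_def)
    have "\<not> keep i"
    proof
      assume "keep i"
      then have "i \<in> Fs" "crk i < m" using i by (auto simp: keep_def)
      then have "Ds \<alpha> i (crk i) (St undefined undefined undefined) = Crashed" using Fc by auto
      then have "fault_in_round n \<alpha> i (crk i)" unfolding fault_in_round_def by (metis lstate.distinct(1))
      then show False using i \<open>crk i < m\<close> by blast
    qed
    then show ?thesis using nf i by blast
  qed
  have "decides_set P (Active n) v r m"
    unfolding decides_set_def
  proof
    fix i assume "i \<in> Active n r m"
    then have "decides P i v r' m" using act S by blast
    then show "decides P i v r m" using locm[of i] by (simp add: decides_def)
  qed
  moreover have "exists_val n v r m"
    using conjunct2[OF S] unfolding exists_val_def loc0 .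
  ultimately show ?thesis by blast
qed

lemma ck_lemma0:
  assumes "\<And>r m. r \<in> R \<Longrightarrow> \<psi> r m \<Longrightarrow> \<phi> r m"
    and "\<And>r m i r' m'. r \<in> R \<Longrightarrow> \<psi> r m \<Longrightarrow> i \<in> S r m \<Longrightarrow> r' \<in> R \<Longrightarrow> loc r' i m' = loc r i m \<Longrightarrow> \<psi> r' m'"
  shows "\<forall>r m. r \<in> R \<longrightarrow> \<psi> r m \<longrightarrow> ((Ev R S) ^^ k) \<phi> r m"
proof (induction k)
  case 0 then show ?case using assms(1) by simp
next
  case (Suc k)
  show ?case
  proof (intro allI impI)
    fix r m assume rm: "r \<in> R" "\<psi> r m"
    have "\<forall>i\<in>S r m. \<forall>r'\<in>R. \<forall>m'. loc r' i m' = loc r i m \<longrightarrow> (Ev R S ^^ k) \<phi> r' m'"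
    proof (intro ballI allI impI)
      fix i r' m' assume "i \<in> S r m" "r' \<in> R" "loc r' i m' = loc r i m"
      then have "\<psi> r' m'" using assms(2) rm by blast
      then show "(Ev R S ^^ k) \<phi> r' m'" using Suc.IH \<open>r' \<in> R\<close> by blast
    qed
    then have "Ev R S ((Ev R S ^^ k) \<phi>) r m" by (simp only: Ev_def Kn_def)
    then show "(Ev R S ^^ Suc k) \<phi> r m" by simp
  qed
qed

theorem proposition6:
  fixes n t :: nat
    and E :: "('v, 'x, 'm) info_exchange"
    and F :: "('e, 'v, 'x, 'm) failure_model"
    and P :: "('v, 'x) protocol"
  assumes "t < n"
    and "wf_info_exchange n E"
    and "wf_env F"
    and "Adv F = crash_adv n t"
    and "hard_crash_protocol n P"
    and "SBA_valid n P (runs n P E F) (Nonfaulty n)"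
  shows "\<forall>i\<in>agents n. \<forall>v.
           valid_in (runs n P E F)
             (imp (decides P i v) (Ck (runs n P E F) (Active n) (decides_set P (Active n) v))) \<and>
           valid_in (runs n P E F)
             (imp (decides P i v) (Ck (runs n P E F) (Active n) (exists_val n v)))"
proof (intro ballI allI conjI)
  fix i v
  assume i: "i \<in> agents n"
  define \<psi> :: "('e, 'v, 'x, 'm) formula" where "\<psi> r m = (\<exists>j\<in>agents n. decides P j v r m)" for r m
  have K: "decides_set P (Active n) v r m \<and> exists_val n v r m"
    if "r \<in> runs n P E F" "\<psi> r m" for r m
    using key[OF assms(4,5,6) that(1)] that(2) by (auto simp: \<psi>_def)
  have prp: "\<psi> r' m'" if "r \<in> runs n P E F" "\<psi> r m" "j \<in> Active n r m" "loc r' j m' = loc r j m" for r m j r' m'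
  proof -
    have "decides P j v r m" using K[OF that(1,2)] that(3) by (simp add: decides_set_def)
    moreover have "j \<in> agents n" using that(3) by (simp add: Active_def)
    ultimately show ?thesis using that(4) unfolding \<psi>_def decides_def by metis
  qed
  have C: "((Ev (runs n P E F) (Active n)) ^^ k) \<phi> r m"
    if "\<And>r m. r \<in> runs n P E F \<Longrightarrow> \<psi> r m \<Longrightarrow> \<phi> r m" "r \<in> runs n P E F" "\<psi> r m" for \<phi> r m k
    by (rule ck_lemma0[where \<psi> = \<psi>, rule_format]) (use that prp in blast)+
  have d: "\<psi> r m" if "decides P i v r m" for r m using that i by (auto simp: \<psi>_def)
  show "valid_in (runs n P E F)
             (imp (decides P i v) (Ck (runs n P E F) (Active n) (decides_set P (Active n) v)))"
    unfolding valid_in_def imp_def Ck_def using C[of "decides_set P (Active n) v"] K d by blast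
  show "valid_in (runs n P E F)
             (imp (decides P i v) (Ck (runs n P E F) (Active n) (exists_val n v)))"
    unfolding valid_in_def imp_def Ck_def using C[of "exists_val n v"] K d by blast
qed

end
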